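(* Let each $f_\xi:\mathbb{R}^d\to\mathbb{R}$ ($\xi\sim\mathcal{D}$) be differentiable and $\mu$-strongly convex with $\mu>0$, let $f=\mathbb{E}_{\xi\sim\mathcal{D}}[f_\xi]$ with minimizer $x_\star$, and suppose there exists $\delta\ge0$ with $\mathbb{E}_{\xi\sim\mathcal{D}}\|\nabla f_\xi(x)-\nabla f(x)-\nabla f_\xi(x_\star)\|^2\le\delta^2\|x-x_\star\|^2$ for all $x\in\mathbb{R}^d$. Consider SPPM-GC: from arbitrary $x_0\in\mathbb{R}^d$, sample $\xi_k\sim\mathcal{D}$ independently and set $x_{k+1}=\operatorname{prox}_{\gamma f_{\xi_k}}\big(x_k+\gamma(\nabla f_{\xi_k}(x_k)-\nabla f(x_k))\big)$. Then for any $\gamma>0$ and all $k\ge0$, $$\mathbb{E}\|x_k-x_\star\|^2\le\left(\frac{1+\gamma^2\delta^2}{(1+\gamma\mu)^2}\right)^k\|x_0-x_\star\|^2.$$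
   Context: $\operatorname{prox}_{\gamma\phi}(y):=\arg\min_{x\in\mathbb{R}^d}\{\phi(x)+\frac{1}{2\gamma}\|x-y\|^2\}$. $\mu$-strong convexity of $g$: $g(y)+\langle\nabla g(y),x-y\rangle+\frac{\mu}{2}\|x-y\|^2\le g(x)$ for all $x,y$. $\nabla f=\mathbb{E}[\nabla f_\xi]$. *)

theory Defs
  imports "HOL-Probability.Probability"
begin

definition prox :: "real \<Rightarrow> ('a::real_normed_vector \<Rightarrow> real) \<Rightarrow> 'a \<Rightarrow> 'a" where
  "prox \<gamma> \<phi> y = (SOME x. \<forall>z. \<phi> x + (1 / (2 * \<gamma>)) * (norm (x - y))\<^sup>2
                              \<le> \<phi> z + (1 / (2 * \<gamma>)) * (norm (z - y))\<^sup>2)"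

primrec sppm_gc ::
  "('b \<Rightarrow> 'a::real_inner \<Rightarrow> real) \<Rightarrow> ('b \<Rightarrow> 'a \<Rightarrow> 'a) \<Rightarrow> ('a \<Rightarrow> 'a) \<Rightarrow> real \<Rightarrow> 'a
    \<Rightarrow> (nat \<Rightarrow> 'b) \<Rightarrow> nat \<Rightarrow> 'a" where
  "sppm_gc F gradF gradf \<gamma> x0 \<omega> 0 = x0"
| "sppm_gc F gradF gradf \<gamma> x0 \<omega> (Suc k) =
     (let xk = sppm_gc F gradF gradf \<gamma> x0 \<omega> k
      in prox \<gamma> (F (\<omega> k)) (xk + \<gamma> *\<^sub>R (gradF (\<omega> k) xk - gradf xk)))"

end

theory Submission
  imports Defs
begin


lemma sc_mono:
  fixes G :: "'a::euclidean_space \<Rightarrow> 'a" and Fx :: "'a \<Rightarrow> real"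
  assumes sc: "\<And>x y. Fx y + G y \<bullet> (x - y) + \<mu> / 2 * (norm (x - y))\<^sup>2 \<le> Fx x"
  shows "\<mu> * (norm (a - b))\<^sup>2 \<le> (G a - G b) \<bullet> (a - b)"
proof -
  have 1: "Fx b + G b \<bullet> (a - b) + \<mu> / 2 * (norm (a - b))\<^sup>2 \<le> Fx a" by (rule sc)
  have 2: "Fx a + G a \<bullet> (b - a) + \<mu> / 2 * (norm (b - a))\<^sup>2 \<le> Fx b" by (rule sc)
  have "norm (b - a) = norm (a - b)" by (simp add: norm_minus_commute)
  moreover have "G a \<bullet> (b - a) = - (G a \<bullet> (a - b))" by (simp add: inner_diff_right)
  ultimately show ?thesis using 1 2 by (simp add: inner_diff_left)
qed

lemma sc_min_exists:
  fixes G :: "'a::euclidean_space \<Rightarrow> 'a" and Fx :: "'a \<Rightarrow> real"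
  assumes sc: "\<And>x y. Fx y + G y \<bullet> (x - y) + \<mu> / 2 * (norm (x - y))\<^sup>2 \<le> Fx x"
    and diff: "\<And>x. (Fx has_derivative (\<lambda>h. G x \<bullet> h)) (at x)"
    and mu: "\<mu> > 0" and gam: "\<gamma> > 0"
  shows "\<exists>p. \<forall>z. Fx p + (1 / (2 * \<gamma>)) * (norm (p - y))\<^sup>2 \<le> Fx z + (1 / (2 * \<gamma>)) * (norm (z - y))\<^sup>2"
proof -
  define \<phi> where "\<phi> z = Fx z + (1 / (2 * \<gamma>)) * (norm (z - y))\<^sup>2" for z
  have contF: "continuous_on UNIV Fx"
    by (rule has_derivative_continuous_on) (use diff in auto)
  have cont: "continuous_on UNIV \<phi>" unfolding \<phi>_def
    by (intro continuous_intros contF)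
  define S where "S = {z. \<phi> z \<le> \<phi> y}"
  have cl: "closed S" unfolding S_def
    by (rule closed_Collect_le[OF cont]) (intro continuous_intros)
  have bd: "S \<subseteq> cball y (2 * norm (G y) / \<mu>)"
  proof
    fix z assume "z \<in> S"
    hence "\<phi> z \<le> \<phi> y" by (simp add: S_def)
    moreover have "\<phi> y = Fx y" by (simp add: \<phi>_def)
    moreover have "0 \<le> (1 / (2 * \<gamma>)) * (norm (z - y))\<^sup>2" using gam by simp
    ultimately have a: "Fx z \<le> Fx y" unfolding \<phi>_def by linarith
    have b: "Fx y + G y \<bullet> (z - y) + \<mu> / 2 * (norm (z - y))\<^sup>2 \<le> Fx z" by (rule sc)
    have c: "- (norm (G y) * norm (z - y)) \<le> G y \<bullet> (z - y)"
      using norm_cauchy_schwarz[of "G y" "z - y"] Cauchy_Schwarz_ineq2[of "G y" "z - y"] by linarith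
    have "\<mu> / 2 * (norm (z - y))\<^sup>2 \<le> norm (G y) * norm (z - y)" using a b c by linarith
    hence "\<mu> / 2 * norm (z - y) \<le> norm (G y)"
      by (cases "norm (z - y) = 0") (auto simp: power2_eq_square)
    hence "norm (z - y) \<le> 2 * norm (G y) / \<mu>" using mu by (simp add: field_simps)
    thus "z \<in> cball y (2 * norm (G y) / \<mu>)" by (simp add: dist_norm norm_minus_commute)
  qed
  have "compact S" using cl bd compact_eq_bounded_closed bounded_cball bounded_subset by blast
  moreover have "S \<noteq> {}" by (auto simp: S_def)
  ultimately obtain p where p: "p \<in> S" "\<forall>z\<in>S. \<phi> p \<le> \<phi> z"
    using continuous_attains_inf[of S \<phi>] continuous_on_subset[OF cont] by blast
  have "\<forall>z. \<phi> p \<le> \<phi> z"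
  proof
    fix z show "\<phi> p \<le> \<phi> z"
      using p by (cases "z \<in> S") (auto simp: S_def)
  qed
  thus ?thesis unfolding \<phi>_def by blast
qed

lemma sc_min_eq:
  fixes G :: "'a::euclidean_space \<Rightarrow> 'a" and Fx :: "'a \<Rightarrow> real"
  assumes diff: "\<And>x. (Fx has_derivative (\<lambda>h. G x \<bullet> h)) (at x)"
    and gam: "\<gamma> > 0"
    and min: "\<forall>z. Fx p + (1 / (2 * \<gamma>)) * (norm (p - y))\<^sup>2 \<le> Fx z + (1 / (2 * \<gamma>)) * (norm (z - y))\<^sup>2"
  shows "p + \<gamma> *\<^sub>R G p = y"
proof -
  have d2: "((\<lambda>z. (norm (z - y))\<^sup>2) has_derivative (\<lambda>h. 2 * ((p - y) \<bullet> h))) (at p)"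
  proof -
    have "((\<lambda>z. (z - y) \<bullet> (z - y)) has_derivative (\<lambda>h. (p - y) \<bullet> h + h \<bullet> (p - y))) (at p)"
      by (auto intro!: derivative_eq_intros)
    thus ?thesis by (simp add: power2_norm_eq_inner inner_commute)
  qed
  have "((\<lambda>z. Fx z + (1 / (2 * \<gamma>)) * (norm (z - y))\<^sup>2) has_derivative
        (\<lambda>h. G p \<bullet> h + (1 / (2 * \<gamma>)) * (2 * ((p - y) \<bullet> h)))) (at p)"
    by (intro has_derivative_add has_derivative_mult_right diff d2)
  from differential_zero_maxmin[OF UNIV_I open_UNIV this] min
  have "(\<lambda>h. G p \<bullet> h + (1 / (2 * \<gamma>)) * (2 * ((p - y) \<bullet> h))) = (\<lambda>v. 0)" by blast
  hence "\<And>h. G p \<bullet> h + (1 / (2 * \<gamma>)) * (2 * ((p - y) \<bullet> h)) = 0" by metis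
  hence "\<And>h. (G p + (1 / \<gamma>) *\<^sub>R (p - y)) \<bullet> h = 0"
    by (simp add: inner_add_left)
  hence "G p + (1 / \<gamma>) *\<^sub>R (p - y) = 0" by (metis inner_eq_zero_iff)
  hence "\<gamma> *\<^sub>R (G p + (1 / \<gamma>) *\<^sub>R (p - y)) = 0" by simp
  hence "\<gamma> *\<^sub>R G p + (p - y) = 0" using gam by (simp add: scaleR_add_right)
  thus ?thesis by (simp add: algebra_simps)
qed



lemma prox_char:
  fixes G :: "'a::euclidean_space \<Rightarrow> 'a" and Fx :: "'a \<Rightarrow> real"
  assumes sc: "\<And>x y. Fx y + G y \<bullet> (x - y) + \<mu> / 2 * (norm (x - y))\<^sup>2 \<le> Fx x"
    and diff: "\<And>x. (Fx has_derivative (\<lambda>h. G x \<bullet> h)) (at x)"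
    and mu: "\<mu> > 0" and gam: "\<gamma> > 0"
  shows "\<forall>z. Fx (prox \<gamma> Fx y) + (1 / (2 * \<gamma>)) * (norm (prox \<gamma> Fx y - y))\<^sup>2 \<le> Fx z + (1 / (2 * \<gamma>)) * (norm (z - y))\<^sup>2"
    and "prox \<gamma> Fx y + \<gamma> *\<^sub>R G (prox \<gamma> Fx y) = y"
proof -
  show 1: "\<forall>z. Fx (prox \<gamma> Fx y) + (1 / (2 * \<gamma>)) * (norm (prox \<gamma> Fx y - y))\<^sup>2 \<le> Fx z + (1 / (2 * \<gamma>)) * (norm (z - y))\<^sup>2"
    unfolding prox_def using sc_min_exists[OF sc diff mu gam, of y] by (rule someI_ex)
  show "prox \<gamma> Fx y + \<gamma> *\<^sub>R G (prox \<gamma> Fx y) = y"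
    by (rule sc_min_eq[OF diff gam 1])
qed

lemma quad_growth:
  fixes G :: "'a::euclidean_space \<Rightarrow> 'a" and Fx :: "'a \<Rightarrow> real"
  assumes sc: "\<And>x y. Fx y + G y \<bullet> (x - y) + \<mu> / 2 * (norm (x - y))\<^sup>2 \<le> Fx x"
    and mu: "\<mu> > 0" and gam: "\<gamma> > 0"
    and eq: "p + \<gamma> *\<^sub>R G p = y"
  shows "Fx p + (1 / (2 * \<gamma>)) * (norm (p - y))\<^sup>2 + (1 / (2 * \<gamma>)) * (norm (z - p))\<^sup>2
         \<le> Fx z + (1 / (2 * \<gamma>)) * (norm (z - y))\<^sup>2"
proof -
  have Gp: "G p = (1 / \<gamma>) *\<^sub>R (y - p)" using eq gam by (auto simp: algebra_simps)
  have a: "Fx p + G p \<bullet> (z - p) + \<mu> / 2 * (norm (z - p))\<^sup>2 \<le> Fx z" by (rule sc)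
  have b: "(norm (z - y))\<^sup>2 = (norm (z - p))\<^sup>2 + 2 * ((z - p) \<bullet> (p - y)) + (norm (p - y))\<^sup>2"
  proof -
    have gen: "(norm (a + b))\<^sup>2 = (norm a)\<^sup>2 + 2 * (a \<bullet> b) + (norm b)\<^sup>2" for a b :: 'a
      by (simp add: power2_norm_eq_inner inner_add_left inner_add_right inner_commute)
    have "z - y = (z - p) + (p - y)" by simp
    thus ?thesis using gen[of "z - p" "p - y"] by metis
  qed
  have c: "G p \<bullet> (z - p) = (1 / \<gamma>) * ((z - p) \<bullet> (y - p))" by (simp add: Gp inner_commute)
  have d: "(z - p) \<bullet> (y - p) = - ((z - p) \<bullet> (p - y))"
    by (metis inner_minus_right minus_diff_eq)
  have e: "0 \<le> \<mu> / 2 * (norm (z - p))\<^sup>2" using mu by simp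
  define t where "t = (z - p) \<bullet> (p - y)"
  have c2: "G p \<bullet> (z - p) = - (t / \<gamma>)" using c d by (simp add: t_def)
  have b2: "(1 / (2 * \<gamma>)) * (norm (z - y))\<^sup>2 = (1 / (2 * \<gamma>)) * (norm (z - p))\<^sup>2 + t / \<gamma> + (1 / (2 * \<gamma>)) * (norm (p - y))\<^sup>2"
    using b gam unfolding t_def[symmetric] by (simp add: field_simps)
  show ?thesis using a c2 b2 e by linarith
qed

lemma prox_bound:
  fixes G :: "'a::euclidean_space \<Rightarrow> 'a" and Fx :: "'a \<Rightarrow> real"
  assumes sc: "\<And>x y. Fx y + G y \<bullet> (x - y) + \<mu> / 2 * (norm (x - y))\<^sup>2 \<le> Fx x"
    and diff: "\<And>x. (Fx has_derivative (\<lambda>h. G x \<bullet> h)) (at x)"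
    and mu: "\<mu> > 0" and gam: "\<gamma> > 0"
  shows "(norm (prox \<gamma> Fx y - q))\<^sup>2 \<le> (norm (y - (q + \<gamma> *\<^sub>R G q)))\<^sup>2 / (1 + \<gamma> * \<mu>)\<^sup>2"
proof -
  define p where "p = prox \<gamma> Fx y"
  have eq: "p + \<gamma> *\<^sub>R G p = y" unfolding p_def by (rule prox_char(2)[OF sc diff mu gam])
  have m: "\<mu> * (norm (p - q))\<^sup>2 \<le> (G p - G q) \<bullet> (p - q)" by (rule sc_mono[OF sc])
  have "(1 + \<gamma> * \<mu>) * (norm (p - q))\<^sup>2 \<le> (p - q) \<bullet> (p - q) + \<gamma> * ((G p - G q) \<bullet> (p - q))"
  proof -
    have "\<gamma> * (\<mu> * (norm (p - q))\<^sup>2) \<le> \<gamma> * ((G p - G q) \<bullet> (p - q))"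
      using m gam by (simp add: mult_left_mono)
    moreover have "(1 + \<gamma> * \<mu>) * (norm (p - q))\<^sup>2 = (norm (p - q))\<^sup>2 + \<gamma> * (\<mu> * (norm (p - q))\<^sup>2)"
      by (simp add: algebra_simps)
    moreover have "(p - q) \<bullet> (p - q) = (norm (p - q))\<^sup>2" by (simp add: power2_norm_eq_inner)
    ultimately show ?thesis by linarith
  qed
  also have "\<dots> = (y - (q + \<gamma> *\<^sub>R G q)) \<bullet> (p - q)"
    by (simp add: eq[symmetric] algebra_simps inner_diff_left inner_add_left)
  also have "\<dots> \<le> norm (y - (q + \<gamma> *\<^sub>R G q)) * norm (p - q)" by (rule norm_cauchy_schwarz)
  finally have h: "(1 + \<gamma> * \<mu>) * (norm (p - q))\<^sup>2 \<le> norm (y - (q + \<gamma> *\<^sub>R G q)) * norm (p - q)" .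
  have pos: "1 + \<gamma> * \<mu> > 0" using gam mu by (simp add: add_pos_pos)
  have "(1 + \<gamma> * \<mu>) * norm (p - q) \<le> norm (y - (q + \<gamma> *\<^sub>R G q))"
  proof (cases "norm (p - q) = 0")
    case True thus ?thesis by simp
  next
    case False
    hence "norm (p - q) > 0" by simp
    with h show ?thesis by (simp add: power2_eq_square mult.assoc[symmetric])
  qed
  hence "((1 + \<gamma> * \<mu>) * norm (p - q))\<^sup>2 \<le> (norm (y - (q + \<gamma> *\<^sub>R G q)))\<^sup>2"
    using pos by (intro power_mono) auto
  hence "(norm (p - q))\<^sup>2 * (1 + \<gamma> * \<mu>)\<^sup>2 \<le> (norm (y - (q + \<gamma> *\<^sub>R G q)))\<^sup>2"
    by (simp add: power_mult_distrib mult.commute)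
  thus ?thesis unfolding p_def[symmetric] using pos
    by (simp add: pos_le_divide_eq)
qed



lemma prox_measurable:
  fixes D :: "'b measure" and F :: "'b \<Rightarrow> 'a::euclidean_space \<Rightarrow> real" and gradF :: "'b \<Rightarrow> 'a \<Rightarrow> 'a"
  assumes F_meas: "(\<lambda>(\<xi>, x). F \<xi> x) \<in> borel_measurable (D \<Otimes>\<^sub>M borel)"
    and F_diff: "\<And>\<xi> x. \<xi> \<in> space D \<Longrightarrow> (F \<xi> has_derivative (\<lambda>h. gradF \<xi> x \<bullet> h)) (at x)"
    and F_sconv: "\<And>\<xi> x y. \<xi> \<in> space D \<Longrightarrow>
        F \<xi> y + gradF \<xi> y \<bullet> (x - y) + \<mu> / 2 * (norm (x - y))\<^sup>2 \<le> F \<xi> x"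
    and mu: "\<mu> > 0" and gam: "\<gamma> > 0"
  shows "(\<lambda>(\<xi>, y). prox \<gamma> (F \<xi>) y) \<in> borel_measurable (D \<Otimes>\<^sub>M borel)"
proof -
  obtain Q :: "'a set" where Qc: "countable Q" and Qd: "\<And>X. open X \<Longrightarrow> X \<noteq> {} \<Longrightarrow> \<exists>d\<in>Q. d \<in> X"
    using countable_dense_exists by blast
  have Qne: "Q \<noteq> {}" using Qd[of UNIV] by auto
  define qq where "qq = from_nat_into Q"
  have qqQ: "range qq = Q" unfolding qq_def using Qne Qc by (rule range_from_nat_into)
  have Qd': "\<And>X. open X \<Longrightarrow> X \<noteq> {} \<Longrightarrow> \<exists>m. qq m \<in> X" using Qd qqQ by blast
  define c where "c = 1 / (2 * \<gamma>)"
  have c: "c > 0" using gam by (simp add: c_def)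
  define \<phi> where "\<phi> \<xi> y z = F \<xi> z + c * (norm (z - y))\<^sup>2" for \<xi> y z
  have phi_meas: "(\<lambda>w. \<phi> (fst w) (snd w) z) \<in> borel_measurable (D \<Otimes>\<^sub>M borel)" for z
  proof -
    have "(\<lambda>w. (fst w, z)) \<in> measurable (D \<Otimes>\<^sub>M borel) (D \<Otimes>\<^sub>M borel)" by measurable
    from measurable_compose[OF this F_meas]
    have "(\<lambda>w. F (fst w) z) \<in> borel_measurable (D \<Otimes>\<^sub>M borel)" by simp
    thus ?thesis unfolding \<phi>_def by measurable
  qed
  define P where "P = (\<lambda>(\<xi>, y). prox \<gamma> (F \<xi>) y)"
  have key: "P w \<bullet> i \<le> a \<longleftrightarrow>
      (\<forall>n::nat. \<exists>m::nat. qq m \<bullet> i < a \<and> (\<forall>m'::nat. \<phi> (fst w) (snd w) (qq m) \<le> \<phi> (fst w) (snd w) (qq m') + 1 / real (Suc n)))"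
    if w: "w \<in> space (D \<Otimes>\<^sub>M borel)" and i: "i \<in> Basis" for w i a
  proof -
    obtain \<xi> y where wxy: "w = (\<xi>, y)" by (cases w)
    have \<xi>: "\<xi> \<in> space D" using w by (simp add: wxy space_pair_measure)
    define p where "p = prox \<gamma> (F \<xi>) y"
    have Pw: "P w = p" by (simp add: P_def p_def wxy)
    note sc = F_sconv[OF \<xi>] and df = F_diff[OF \<xi>]
    have pmin: "\<phi> \<xi> y p \<le> \<phi> \<xi> y z" for z
      using prox_char(1)[OF sc df mu gam, of y] unfolding \<phi>_def c_def p_def by blast
    have peq: "p + \<gamma> *\<^sub>R gradF \<xi> p = y" unfolding p_def by (rule prox_char(2)[OF sc df mu gam])
    have qg: "\<phi> \<xi> y p + c * (norm (z - p))\<^sup>2 \<le> \<phi> \<xi> y z" for z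
      using quad_growth[OF sc mu gam peq, of z] unfolding \<phi>_def c_def by linarith
    have contF: "continuous_on UNIV (F \<xi>)"
      by (rule has_derivative_continuous_on) (use df in auto)
    have cont: "continuous_on UNIV (\<phi> \<xi> y)" unfolding \<phi>_def
      by (intro continuous_intros contF)
    have ni: "norm i = 1" using i by simp
    have ii: "i \<bullet> i = 1" using i by simp
    have H: "\<exists>m. qq m \<bullet> i < b \<and> \<phi> \<xi> y (qq m) < \<phi> \<xi> y p + e" if e: "e > 0" and b: "p \<bullet> i \<le> b" for e b
    proof -
      have "open {z. \<phi> \<xi> y z < \<phi> \<xi> y p + e}"
        by (rule open_Collect_less) (auto intro: cont continuous_intros)
      moreover have "p \<in> {z. \<phi> \<xi> y z < \<phi> \<xi> y p + e}" using e by simp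
      ultimately obtain r where r: "r > 0" "ball p r \<subseteq> {z. \<phi> \<xi> y z < \<phi> \<xi> y p + e}"
        using open_contains_ball by blast
      define X where "X = ball p r \<inter> {z. z \<bullet> i < b}"
      have "open X" unfolding X_def by (intro open_Int open_ball open_halfspace_component_lt)
      moreover have "p - (r / 2) *\<^sub>R i \<in> X"
        using r b unfolding X_def by (auto simp: dist_norm ni inner_diff_left ii)
      ultimately obtain m where "qq m \<in> X" using Qd' by blast
      thus ?thesis using r unfolding X_def by blast
    qed
    show ?thesis
    proof
      assume "P w \<bullet> i \<le> a"
      hence pa: "p \<bullet> i \<le> a" by (simp add: Pw)
      show "\<forall>n::nat. \<exists>m::nat. qq m \<bullet> i < a \<and> (\<forall>m'::nat. \<phi> (fst w) (snd w) (qq m) \<le> \<phi> (fst w) (snd w) (qq m') + 1 / real (Suc n))"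
      proof
        fix n :: nat
        obtain m where m: "qq m \<bullet> i < a" "\<phi> \<xi> y (qq m) < \<phi> \<xi> y p + 1 / real (Suc n)"
          using H[OF _ pa, of "1 / real (Suc n)"] by auto
        have "\<forall>m'. \<phi> \<xi> y (qq m) \<le> \<phi> \<xi> y (qq m') + 1 / real (Suc n)"
          using m(2) pmin by (smt (verit))
        thus "\<exists>m::nat. qq m \<bullet> i < a \<and> (\<forall>m'::nat. \<phi> (fst w) (snd w) (qq m) \<le> \<phi> (fst w) (snd w) (qq m') + 1 / real (Suc n))"
          using m(1) by (auto simp: wxy)
      qed
    next
      assume R: "\<forall>n::nat. \<exists>m::nat. qq m \<bullet> i < a \<and> (\<forall>m'::nat. \<phi> (fst w) (snd w) (qq m) \<le> \<phi> (fst w) (snd w) (qq m') + 1 / real (Suc n))"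
      show "P w \<bullet> i \<le> a"
      proof (rule ccontr)
        assume "\<not> P w \<bullet> i \<le> a"
        hence pa: "p \<bullet> i > a" by (simp add: Pw)
        define d where "d = p \<bullet> i - a"
        have d: "d > 0" using pa by (simp add: d_def)
        have cd: "c * d\<^sup>2 / 2 > 0" using c d by simp
        obtain n where n: "inverse (real (Suc n)) < c * d\<^sup>2 / 2"
          using reals_Archimedean[OF cd] by blast
        obtain m where m: "qq m \<bullet> i < a" "\<forall>m'. \<phi> \<xi> y (qq m) \<le> \<phi> \<xi> y (qq m') + 1 / real (Suc n)"
          using R[rule_format, of n] by (auto simp: wxy)
        obtain m' where m': "\<phi> \<xi> y (qq m') < \<phi> \<xi> y p + c * d\<^sup>2 / 2"
          using H[OF cd, of "p \<bullet> i + 1"] by auto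
        have "d < (p - qq m) \<bullet> i" using m(1) by (simp add: d_def inner_diff_left)
        also have "\<dots> \<le> norm (p - qq m)" using Basis_le_norm[OF i, of "p - qq m"] by linarith
        finally have "d < norm (qq m - p)" by (simp add: norm_minus_commute)
        hence "d\<^sup>2 < (norm (qq m - p))\<^sup>2" using d by (intro power_strict_mono) auto
        hence "c * d\<^sup>2 < c * (norm (qq m - p))\<^sup>2" using c by simp
        hence "\<phi> \<xi> y p + c * d\<^sup>2 < \<phi> \<xi> y (qq m)" using qg[of "qq m"] by linarith
        moreover have "\<phi> \<xi> y (qq m) \<le> \<phi> \<xi> y (qq m') + 1 / real (Suc n)" using m(2) by blast
        ultimately show False using m' n by (simp add: inverse_eq_divide)
      qed
    qed
  qed
  have "P \<in> borel_measurable (D \<Otimes>\<^sub>M borel)"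
    unfolding borel_measurable_iff_halfspace_le
  proof (intro ballI allI)
    fix i :: 'a and a :: real assume i: "i \<in> Basis"
    have "{w \<in> space (D \<Otimes>\<^sub>M borel). P w \<bullet> i \<le> a} =
      {w \<in> space (D \<Otimes>\<^sub>M borel). \<forall>n::nat. \<exists>m::nat. qq m \<bullet> i < a \<and> (\<forall>m'::nat. \<phi> (fst w) (snd w) (qq m) \<le> \<phi> (fst w) (snd w) (qq m') + 1 / real (Suc n))}"
      using key[OF _ i] by blast
    also have "\<dots> \<in> sets (D \<Otimes>\<^sub>M borel)"
      using phi_meas by measurable
    finally show "{w \<in> space (D \<Otimes>\<^sub>M borel). P w \<bullet> i \<le> a} \<in> sets (D \<Otimes>\<^sub>M borel)" .
  qed
  thus ?thesis by (simp add: P_def)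
qed



lemma norm_add_scale_sq:
  fixes a b :: "'a::real_inner"
  shows "(norm (a + t *\<^sub>R b))\<^sup>2 = (norm a)\<^sup>2 + 2 * t * (a \<bullet> b) + t\<^sup>2 * (norm b)\<^sup>2"
proof -
  have "(norm (a + t *\<^sub>R b))\<^sup>2 = (a + t *\<^sub>R b) \<bullet> (a + t *\<^sub>R b)" by (simp add: power2_norm_eq_inner)
  also have "\<dots> = a \<bullet> a + 2 * t * (a \<bullet> b) + t\<^sup>2 * (b \<bullet> b)"
    by (simp add: inner_add_left inner_add_right inner_commute power2_eq_square algebra_simps)
  also have "\<dots> = (norm a)\<^sup>2 + 2 * t * (a \<bullet> b) + t\<^sup>2 * (norm b)\<^sup>2" by (simp add: power2_norm_eq_inner)
  finally show ?thesis .
qed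

lemma inner_step:
  fixes D :: "'b measure" and F :: "'b \<Rightarrow> 'a::euclidean_space \<Rightarrow> real" and gradF :: "'b \<Rightarrow> 'a \<Rightarrow> 'a"
  assumes D: "prob_space D"
    and gradF_meas: "(\<lambda>(\<xi>, x). gradF \<xi> x) \<in> borel_measurable (D \<Otimes>\<^sub>M borel)"
    and F_diff: "\<And>\<xi> x. \<xi> \<in> space D \<Longrightarrow> (F \<xi> has_derivative (\<lambda>h. gradF \<xi> x \<bullet> h)) (at x)"
    and F_sconv: "\<And>\<xi> x y. \<xi> \<in> space D \<Longrightarrow>
        F \<xi> y + gradF \<xi> y \<bullet> (x - y) + \<mu> / 2 * (norm (x - y))\<^sup>2 \<le> F \<xi> x"
    and mu: "\<mu> > 0" and gam: "\<gamma> > 0"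
    and gradF_int: "\<And>x. integrable D (\<lambda>\<xi>. gradF \<xi> x)"
    and gradf_def: "\<And>x. gradf x = (\<integral>\<xi>. gradF \<xi> x \<partial>D)"
    and gxs: "gradf xs = 0"
    and grad_sim: "\<And>x. (\<integral>\<^sup>+\<xi>. ennreal ((norm (gradF \<xi> x - gradf x - gradF \<xi> xs))\<^sup>2) \<partial>D)
                        \<le> ennreal (\<delta>\<^sup>2 * (norm (x - xs))\<^sup>2)"
  shows "(\<integral>\<^sup>+\<xi>. ennreal ((norm (prox \<gamma> (F \<xi>) (z + \<gamma> *\<^sub>R (gradF \<xi> z - gradf z)) - xs))\<^sup>2) \<partial>D)
         \<le> ennreal ((1 + \<gamma>\<^sup>2 * \<delta>\<^sup>2) / (1 + \<gamma> * \<mu>)\<^sup>2 * (norm (z - xs))\<^sup>2)"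
proof -
  interpret prob_space D by (rule D)
  define K where "K = (1 + \<gamma> * \<mu>)\<^sup>2"
  have K: "K > 0" unfolding K_def using gam mu by (smt (verit) mult_pos_pos zero_less_power)
  define u where "u = z - xs"
  define v where "v \<xi> = gradF \<xi> z - gradf z - gradF \<xi> xs" for \<xi>
  define g where "g \<xi> = (norm u)\<^sup>2 + 2 * \<gamma> * (u \<bullet> v \<xi>) + \<gamma>\<^sup>2 * (norm (v \<xi>))\<^sup>2" for \<xi>
  have gradF_meas': "(\<lambda>\<xi>. gradF \<xi> x) \<in> borel_measurable D" for x
  proof -
    have "(\<lambda>\<xi>. (\<xi>, x)) \<in> measurable D (D \<Otimes>\<^sub>M borel)" by measurable
    from measurable_compose[OF this gradF_meas] show ?thesis by simp
  qed
  have vm: "v \<in> borel_measurable D" unfolding v_def using gradF_meas' by measurable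
  have vint: "integrable D v" unfolding v_def using gradF_int by auto
  have v0: "(\<integral>\<xi>. v \<xi> \<partial>D) = 0"
    unfolding v_def using gradF_int by (simp add: gradf_def[symmetric] gxs prob_space)
  have B: "(\<integral>\<^sup>+\<xi>. ennreal ((norm (v \<xi>))\<^sup>2) \<partial>D) \<le> ennreal (\<delta>\<^sup>2 * (norm u)\<^sup>2)"
    using grad_sim[of z] by (simp add: v_def u_def)
  have v2int: "integrable D (\<lambda>\<xi>. (norm (v \<xi>))\<^sup>2)"
  proof (rule integrableI_bounded)
    show "(\<lambda>\<xi>. (norm (v \<xi>))\<^sup>2) \<in> borel_measurable D" using vm by measurable
    have "(\<integral>\<^sup>+\<xi>. ennreal (norm ((norm (v \<xi>))\<^sup>2)) \<partial>D) = (\<integral>\<^sup>+\<xi>. ennreal ((norm (v \<xi>))\<^sup>2) \<partial>D)" by simp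
    also have "\<dots> < \<infinity>" using B by (simp add: le_less_trans)
    finally show "(\<integral>\<^sup>+\<xi>. ennreal (norm ((norm (v \<xi>))\<^sup>2)) \<partial>D) < \<infinity>" .
  qed
  have v2le: "(\<integral>\<xi>. (norm (v \<xi>))\<^sup>2 \<partial>D) \<le> \<delta>\<^sup>2 * (norm u)\<^sup>2"
  proof -
    have "ennreal (\<integral>\<xi>. (norm (v \<xi>))\<^sup>2 \<partial>D) = (\<integral>\<^sup>+\<xi>. ennreal ((norm (v \<xi>))\<^sup>2) \<partial>D)"
      by (rule nn_integral_eq_integral[symmetric]) (use v2int in auto)
    with B have "ennreal (\<integral>\<xi>. (norm (v \<xi>))\<^sup>2 \<partial>D) \<le> ennreal (\<delta>\<^sup>2 * (norm u)\<^sup>2)" by simp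
    thus ?thesis by (simp add: ennreal_le_iff)
  qed
  have gint: "integrable D g" unfolding g_def using vint v2int by auto
  have gI: "(\<integral>\<xi>. g \<xi> \<partial>D) = (norm u)\<^sup>2 + \<gamma>\<^sup>2 * (\<integral>\<xi>. (norm (v \<xi>))\<^sup>2 \<partial>D)"
    unfolding g_def using vint v2int v0 prob_space by (simp add: integral_add integral_mult_right)
  have gnn: "g \<xi> \<ge> 0" for \<xi>
  proof -
    have "g \<xi> = (norm (u + \<gamma> *\<^sub>R v \<xi>))\<^sup>2"
      by (simp add: g_def norm_add_scale_sq)
    thus ?thesis by simp
  qed
  have pt: "(norm (prox \<gamma> (F \<xi>) (z + \<gamma> *\<^sub>R (gradF \<xi> z - gradf z)) - xs))\<^sup>2 \<le> g \<xi> / K"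
    if \<xi>: "\<xi> \<in> space D" for \<xi>
  proof -
    have "(norm (prox \<gamma> (F \<xi>) (z + \<gamma> *\<^sub>R (gradF \<xi> z - gradf z)) - xs))\<^sup>2
        \<le> (norm ((z + \<gamma> *\<^sub>R (gradF \<xi> z - gradf z)) - (xs + \<gamma> *\<^sub>R gradF \<xi> xs)))\<^sup>2 / K"
      unfolding K_def by (rule prox_bound[OF F_sconv[OF \<xi>] F_diff[OF \<xi>] mu gam])
    also have "(z + \<gamma> *\<^sub>R (gradF \<xi> z - gradf z)) - (xs + \<gamma> *\<^sub>R gradF \<xi> xs) = u + \<gamma> *\<^sub>R v \<xi>"
      by (simp add: u_def v_def algebra_simps)
    also have "(norm (u + \<gamma> *\<^sub>R v \<xi>))\<^sup>2 = g \<xi>"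
      by (simp add: g_def norm_add_scale_sq)
    finally show ?thesis .
  qed
  have "(\<integral>\<^sup>+\<xi>. ennreal ((norm (prox \<gamma> (F \<xi>) (z + \<gamma> *\<^sub>R (gradF \<xi> z - gradf z)) - xs))\<^sup>2) \<partial>D)
        \<le> (\<integral>\<^sup>+\<xi>. ennreal (g \<xi> / K) \<partial>D)"
    by (rule nn_integral_mono) (use pt in \<open>auto intro: ennreal_leI\<close>)
  also have "\<dots> = ennreal (\<integral>\<xi>. g \<xi> / K \<partial>D)"
    by (rule nn_integral_eq_integral) (use gint gnn K in auto)
  also have "(\<integral>\<xi>. g \<xi> / K \<partial>D) = (\<integral>\<xi>. g \<xi> \<partial>D) / K" by simp
  also have "\<dots> \<le> ((norm u)\<^sup>2 + \<gamma>\<^sup>2 * (\<delta>\<^sup>2 * (norm u)\<^sup>2)) / K"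
    unfolding gI using v2le K by (intro divide_right_mono add_left_mono mult_left_mono) auto
  also have "\<dots> = (1 + \<gamma>\<^sup>2 * \<delta>\<^sup>2) / (1 + \<gamma> * \<mu>)\<^sup>2 * (norm (z - xs))\<^sup>2"
    by (simp add: K_def u_def field_simps)
  finally show ?thesis by (simp add: ennreal_leI)
qed



lemma sppm_dep:
  "(\<And>j. j < k \<Longrightarrow> \<omega> j = \<omega>' j) \<Longrightarrow> sppm_gc F gradF gradf \<gamma> x0 \<omega> k = sppm_gc F gradF gradf \<gamma> x0 \<omega>' k"
  by (induction k) (auto simp: Let_def)

theorem mainTheorem7:
  fixes D :: "'b measure"
    and F :: "'b \<Rightarrow> 'a::euclidean_space \<Rightarrow> real"
    and gradF :: "'b \<Rightarrow> 'a \<Rightarrow> 'a"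
    and f :: "'a \<Rightarrow> real" and gradf :: "'a \<Rightarrow> 'a"
    and \<mu> \<delta> \<gamma> :: real and xs x0 :: 'a and k :: nat
  assumes D: "prob_space D"
    and F_meas: "(\<lambda>(\<xi>, x). F \<xi> x) \<in> borel_measurable (D \<Otimes>\<^sub>M borel)"
    and gradF_meas: "(\<lambda>(\<xi>, x). gradF \<xi> x) \<in> borel_measurable (D \<Otimes>\<^sub>M borel)"
    and F_diff: "\<And>\<xi> x. \<xi> \<in> space D \<Longrightarrow> (F \<xi> has_derivative (\<lambda>h. gradF \<xi> x \<bullet> h)) (at x)"
    and mu_pos: "\<mu> > 0"
    and F_sconv: "\<And>\<xi> x y. \<xi> \<in> space D \<Longrightarrow>
        F \<xi> y + gradF \<xi> y \<bullet> (x - y) + \<mu> / 2 * (norm (x - y))\<^sup>2 \<le> F \<xi> x"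
    and F_int: "\<And>x. integrable D (\<lambda>\<xi>. F \<xi> x)"
    and f_def: "\<And>x. f x = (\<integral>\<xi>. F \<xi> x \<partial>D)"
    and f_diff: "\<And>x. (f has_derivative (\<lambda>h. gradf x \<bullet> h)) (at x)"
    and gradF_int: "\<And>x. integrable D (\<lambda>\<xi>. gradF \<xi> x)"
    and gradf_def: "\<And>x. gradf x = (\<integral>\<xi>. gradF \<xi> x \<partial>D)"
    and xs_min: "\<And>x. f xs \<le> f x"
    and delta_nonneg: "\<delta> \<ge> 0"
    and grad_sim: "\<And>x. (\<integral>\<^sup>+\<xi>. ennreal ((norm (gradF \<xi> x - gradf x - gradF \<xi> xs))\<^sup>2) \<partial>D)
                        \<le> ennreal (\<delta>\<^sup>2 * (norm (x - xs))\<^sup>2)"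
    and gamma_pos: "\<gamma> > 0"
  shows "(\<integral>\<^sup>+\<omega>. ennreal ((norm (sppm_gc F gradF gradf \<gamma> x0 \<omega> k - xs))\<^sup>2)
            \<partial>(PiM UNIV (\<lambda>_::nat. D)))
         \<le> ennreal (((1 + \<gamma>\<^sup>2 * \<delta>\<^sup>2) / (1 + \<gamma> * \<mu>)\<^sup>2) ^ k * (norm (x0 - xs))\<^sup>2)"
proof -
  interpret Dp: prob_space D by (rule D)
  interpret P: product_prob_space "\<lambda>_::nat. D" UNIV
    by (simp add: product_prob_space_def product_prob_space_axioms_def product_sigma_finite_def D Dp.sigma_finite_measure_axioms)
  let ?X = "sppm_gc F gradF gradf \<gamma> x0"
  define c where "c = (1 + \<gamma>\<^sup>2 * \<delta>\<^sup>2) / (1 + \<gamma> * \<mu>)\<^sup>2"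
  have c0: "c \<ge> 0" unfolding c_def by simp
  have gxs: "gradf xs = 0"
  proof -
    have "(\<lambda>h. gradf xs \<bullet> h) = (\<lambda>v. 0)"
      by (rule differential_zero_maxmin[OF UNIV_I open_UNIV f_diff]) (use xs_min in auto)
    hence "gradf xs \<bullet> gradf xs = 0" by metis
    thus ?thesis by simp
  qed
  have gradf_meas: "gradf \<in> borel_measurable borel"
  proof -
    have "(\<lambda>(x, \<xi>). gradF \<xi> x) \<in> borel_measurable (borel \<Otimes>\<^sub>M D)"
    proof -
      have "(\<lambda>w. (snd w, fst w)) \<in> measurable (borel \<Otimes>\<^sub>M D) (D \<Otimes>\<^sub>M borel)" by measurable
      from measurable_compose[OF this gradF_meas] show ?thesis by (simp add: case_prod_beta)
    qed
    hence "(\<lambda>x. \<integral>\<xi>. gradF \<xi> x \<partial>D) \<in> borel_measurable borel"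
      by (rule Dp.borel_measurable_lebesgue_integral)
    moreover have "gradf = (\<lambda>x. \<integral>\<xi>. gradF \<xi> x \<partial>D)" using gradf_def by auto
    ultimately show ?thesis by simp
  qed
  have prox_meas: "(\<lambda>(\<xi>, y). prox \<gamma> (F \<xi>) y) \<in> borel_measurable (D \<Otimes>\<^sub>M borel)"
    by (rule prox_measurable[OF F_meas F_diff F_sconv mu_pos gamma_pos])
  have Xmeas: "\<And>I. {..<k} \<subseteq> I \<Longrightarrow> (\<lambda>\<omega>. ?X \<omega> k) \<in> borel_measurable (PiM I (\<lambda>_. D))" for k
  proof (induction k)
    case 0 thus ?case by simp
  next
    case (Suc k)
    have IH: "(\<lambda>\<omega>. ?X \<omega> k) \<in> borel_measurable (PiM I (\<lambda>_. D))"
    proof -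
      have "{..<k} \<subseteq> I" using Suc.prems by auto
      thus ?thesis by (rule Suc.IH)
    qed
    have kI: "k \<in> I" using Suc.prems by auto
    have comp: "(\<lambda>\<omega>. \<omega> k) \<in> measurable (PiM I (\<lambda>_. D)) D"
      using kI by (rule measurable_component_singleton)
    have g1: "(\<lambda>\<omega>. gradF (\<omega> k) (?X \<omega> k)) \<in> borel_measurable (PiM I (\<lambda>_. D))"
    proof -
      have "(\<lambda>\<omega>. (\<omega> k, ?X \<omega> k)) \<in> measurable (PiM I (\<lambda>_. D)) (D \<Otimes>\<^sub>M borel)"
        using comp IH by (rule measurable_Pair)
      from measurable_compose[OF this gradF_meas] show ?thesis by simp
    qed
    have g2: "(\<lambda>\<omega>. gradf (?X \<omega> k)) \<in> borel_measurable (PiM I (\<lambda>_. D))"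
      using measurable_compose[OF IH gradf_meas] .
    have arg: "(\<lambda>\<omega>. (\<omega> k, ?X \<omega> k + \<gamma> *\<^sub>R (gradF (\<omega> k) (?X \<omega> k) - gradf (?X \<omega> k))))
        \<in> measurable (PiM I (\<lambda>_. D)) (D \<Otimes>\<^sub>M borel)"
      using comp IH g1 g2 by measurable
    from measurable_compose[OF arg prox_meas] show ?case by (simp add: Let_def)
  qed
  define E where "E k = (\<integral>\<^sup>+\<omega>. ennreal ((norm (?X \<omega> k - xs))\<^sup>2) \<partial>(PiM {..<k} (\<lambda>_. D)))" for k
  have Ebound: "E k \<le> ennreal (c ^ k * (norm (x0 - xs))\<^sup>2)" for k
  proof (induction k)
    case 0
    interpret P0: prob_space "PiM ({}::nat set) (\<lambda>_. D)" by (rule prob_space_PiM) (rule D)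
    show ?case by (simp add: E_def P0.emeasure_space_1)
  next
    case (Suc k)
    have meas: "(\<lambda>\<omega>. ennreal ((norm (?X \<omega> (Suc k) - xs))\<^sup>2)) \<in> borel_measurable (PiM (insert k {..<k}) (\<lambda>_. D))"
      using Xmeas[of "Suc k" "insert k {..<k}"] by (auto simp: lessThan_Suc)
    have "E (Suc k) = (\<integral>\<^sup>+x. (\<integral>\<^sup>+y. ennreal ((norm (?X (x(k := y)) (Suc k) - xs))\<^sup>2) \<partial>D) \<partial>PiM {..<k} (\<lambda>_. D))"
      unfolding E_def lessThan_Suc by (rule P.product_nn_integral_insert[OF _ _ meas]) auto
    also have "\<dots> \<le> (\<integral>\<^sup>+x. ennreal (c * (norm (?X x k - xs))\<^sup>2) \<partial>PiM {..<k} (\<lambda>_. D))"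
    proof (rule nn_integral_mono)
      fix x
      have eq: "?X (x(k := y)) (Suc k) = prox \<gamma> (F y) (?X x k + \<gamma> *\<^sub>R (gradF y (?X x k) - gradf (?X x k)))" for y
      proof -
        have "?X (x(k := y)) k = ?X x k" by (rule sppm_dep) auto
        thus ?thesis by (simp add: Let_def)
      qed
      show "(\<integral>\<^sup>+y. ennreal ((norm (?X (x(k := y)) (Suc k) - xs))\<^sup>2) \<partial>D) \<le> ennreal (c * (norm (?X x k - xs))\<^sup>2)"
        unfolding eq c_def
        by (rule inner_step[OF D gradF_meas F_diff F_sconv mu_pos gamma_pos gradF_int gradf_def gxs grad_sim])
    qed
    also have "\<dots> = ennreal c * E k"
      unfolding E_def using Xmeas[of k "{..<k}"]
      by (subst nn_integral_cmult[symmetric]) (auto simp: ennreal_mult c0)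
    also have "\<dots> \<le> ennreal c * ennreal (c ^ k * (norm (x0 - xs))\<^sup>2)"
      using Suc.IH by (rule mult_left_mono) simp
    also have "\<dots> = ennreal (c ^ Suc k * (norm (x0 - xs))\<^sup>2)"
      using c0 by (simp add: ennreal_mult[symmetric] mult.assoc)
    finally show ?case .
  qed
  have "(\<integral>\<^sup>+\<omega>. ennreal ((norm (?X \<omega> k - xs))\<^sup>2) \<partial>(PiM UNIV (\<lambda>_::nat. D))) = E k"
  proof -
    have m: "(\<lambda>\<omega>. ennreal ((norm (?X \<omega> k - xs))\<^sup>2)) \<in> borel_measurable (PiM {..<k} (\<lambda>_. D))"
      using Xmeas[of k "{..<k}"] by auto
    have "E k = (\<integral>\<^sup>+\<omega>. ennreal ((norm (?X \<omega> k - xs))\<^sup>2) \<partial>distr (PiM UNIV (\<lambda>_. D)) (PiM {..<k} (\<lambda>_. D)) (\<lambda>\<omega>. restrict \<omega> {..<k}))"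
      unfolding E_def by (subst P.distr_PiM_restrict_finite) auto
    also have "\<dots> = (\<integral>\<^sup>+\<omega>. ennreal ((norm (?X (restrict \<omega> {..<k}) k - xs))\<^sup>2) \<partial>PiM UNIV (\<lambda>_. D))"
      by (rule nn_integral_distr) (use m in \<open>auto intro: measurable_restrict_subset\<close>)
    also have "\<dots> = (\<integral>\<^sup>+\<omega>. ennreal ((norm (?X \<omega> k - xs))\<^sup>2) \<partial>PiM UNIV (\<lambda>_. D))"
    proof -
      have "?X (restrict \<omega> {..<k}) k = ?X \<omega> k" for \<omega> by (rule sppm_dep) auto
      thus ?thesis by simp
    qed
    finally show ?thesis by simp
  qed
  thus ?thesis using Ebound[of k] by (simp add: c_def)
qed


end
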